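(* There exists a constant $\kappa_{19}>0$, depending only on $N,\gamma,\beta$, such that for any $x_0\in\mathbb R^N$ and any $s>0$, $$\kappa_{19}^{-1}s^{1/2}\big[s^{1/\sigma}\vee|x_0|\big]^{\frac{\gamma-\beta}2}\le\big(\rho^{\gamma,\beta}_{x_0}\big)^{-1}(s)\le\kappa_{19}s^{1/2}\big[s^{1/\sigma}\vee|x_0|\big]^{\frac{\gamma-\beta}2}.$$ Consequently, for any open $\Omega\subseteq\mathbb R^N$, any $T>0$, any $x_0\in\Omega$ and any $s\in(0,T]$: $(\rho^{\gamma,\beta}_{x_0})^{-1}(s)\le\kappa_{19}s^{1/\sigma}$ if $\sigma\ge2$, and $(\rho^{\gamma,\beta}_{x_0})^{-1}(s)\le\kappa_{19}s^{1/2}\big(T^{1/\sigma}\vee\sup_{z\in\Omega}|z|\big)^{\frac{\gamma-\beta}2}$ if $0<\sigma<2$.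
   Context: $N\ge3$ and $\gamma,\beta\in\mathbb R$ satisfy $\gamma<N$ and $\gamma-2<\beta\le\frac{N-2}{N}\gamma$; $\sigma=2+\beta-\gamma$. $\rho^{\gamma,\beta}_{x_0}(R)=\big(\int_{B_R(x_0)}|x|^{(\beta-\gamma)N/2}dx\big)^{2/N}$ for $R>0$; it is increasing in $R$ and $(\rho^{\gamma,\beta}_{x_0})^{-1}$ denotes its inverse function. $a\vee b=\max\{a,b\}$. *)

theory Defs
  imports "HOL-Analysis.Analysis"
begin

definition rho_gb :: "real \<Rightarrow> real \<Rightarrow> real ^ 'n \<Rightarrow> real \<Rightarrow> real" where
  "rho_gb \<gamma> \<beta> x0 R =
     (LINT x : ball x0 R | lborel. norm x powr ((\<beta> - \<gamma>) * real CARD('n) / 2))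
       powr (2 / real CARD('n))"

text \<open>Its inverse function (rho is increasing on (0,infinity)).\<close>
definition rho_gb_inv :: "real \<Rightarrow> real \<Rightarrow> real ^ 'n \<Rightarrow> real \<Rightarrow> real" where
  "rho_gb_inv \<gamma> \<beta> x0 s = (THE R. 0 < R \<and> rho_gb \<gamma> \<beta> x0 R = s)"

end

theory Submission
  imports Defs
begin


lemma dyadic_alg:
  fixes \<rho> a V :: real and n k :: nat assumes r: "0 < \<rho>"
  shows "(\<rho> / 2^(Suc k)) powr a * (V * (\<rho> / 2^k) ^ n) = (V * 2 powr (-a) * \<rho> powr (n + a)) * (2 powr (-(n + a))) ^ k"
proof -
  have e0: "(2::real)^(Suc k) = 2 powr (real k + 1)"
    using powr_realpow[of 2 "Suc k"] by (simp add: add.commute)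
  have e1: "(\<rho> / 2^(Suc k)) powr a = \<rho> powr a * 2 powr (-a) * 2 powr (- a * k)"
    unfolding e0 using r by (simp add: powr_divide powr_powr powr_minus_divide powr_add[symmetric] algebra_simps)
  have e2: "(\<rho> / 2^k) ^ n = \<rho> powr n * 2 powr (- n * k)"
    using r by (simp add: power_divide powr_realpow[symmetric] powr_powr powr_minus_divide power_mult[symmetric] flip: of_nat_mult) (metis mult.commute)
  have e3: "(2 powr (-(n + a))) ^ k = (2::real) powr (-(n+a) * k)"
    by (simp add: powr_power[symmetric] mult.commute)
  show ?thesis unfolding e1 e2 e3 using r by (simp add: powr_add algebra_simps powr_diff powr_minus divide_inverse)
qed

lemma dyadic_index:
  fixes t \<rho> :: real assumes "0 < t" "t < \<rho>"
  shows "\<exists>k::nat. \<rho> / 2^(Suc k) \<le> t \<and> t < \<rho> / 2^k"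
proof -
  have ex: "\<exists>k::nat. \<rho> / 2^(Suc k) \<le> t"
  proof -
    obtain k::nat where "\<rho> / t < 2^k" using real_arch_pow[of 2 "\<rho>/t"] by auto
    hence "\<rho> < t * 2^k" using assms by (simp add: field_simps)
    moreover have "t * 2^k \<le> t * (2 * 2^k)" using assms by simp
    ultimately have "\<rho> / 2^(Suc k) \<le> t" by (simp add: field_simps)
    thus ?thesis by blast
  qed
  define k where "k = (LEAST k::nat. \<rho> / 2^(Suc k) \<le> t)"
  have k1: "\<rho> / 2^(Suc k) \<le> t" unfolding k_def by (rule LeastI_ex[OF ex])
  have k2: "t < \<rho> / 2^k"
  proof (cases k)
    case 0 then show ?thesis using assms by simp
  next
    case (Suc m)
    have "\<not> \<rho> / 2^(Suc m) \<le> t" using Suc unfolding k_def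
      by (metis Least_le Suc_n_not_le_n k_def)
    thus ?thesis using Suc by simp
  qed
  show ?thesis using k1 k2 by blast
qed

lemma ennreal_le_suminf: "(f::nat \<Rightarrow> ennreal) j \<le> suminf f"
  using sum_le_suminf[of f "{j}"] by simp

lemma nn_upper0:
  fixes a \<rho> :: real
  assumes a: "a < 0" "- real DIM('a::euclidean_space) < a" and r: "0 < \<rho>"
  shows "(\<integral>\<^sup>+x. ennreal (indicator (ball (0::'a) \<rho>) x * norm x powr a) \<partial>lborel)
     \<le> ennreal (unit_ball_vol DIM('a) * 2 powr (-a) / (1 - 2 powr (-(DIM('a) + a))) * \<rho> powr (DIM('a) + a))"
proof -
  define n where "n = DIM('a)"
  define V where "V = unit_ball_vol n"
  define c where "c k = (\<rho> / 2^(Suc k)) powr a" for k :: nat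
  define q where "q = (2::real) powr (-(n + a))"
  have q: "0 < q" "q < 1" unfolding q_def using a n_def
    using powr_less_mono[of "-(n + a)" 0 "2::real"] by auto
  have V: "0 < V" unfolding V_def by simp
  have pt: "ennreal (indicator (ball (0::'a) \<rho>) x * norm x powr a)
      \<le> (\<Sum>k. ennreal (c k * indicator (ball (0::'a) (\<rho> / 2^k)) x))" for x
  proof (cases "x \<in> ball 0 \<rho> \<and> x \<noteq> 0")
    case False thus ?thesis by (auto simp: indicator_def)
  next
    case True
    then obtain k where k: "\<rho> / 2^(Suc k) \<le> norm x" "norm x < \<rho> / 2^k"
      using dyadic_index[of "norm x" \<rho>] by auto
    have "norm x powr a \<le> c k" unfolding c_def
      using k a by (intro powr_mono2') (auto simp: r)
    hence "ennreal (indicator (ball (0::'a) \<rho>) x * norm x powr a) \<le> ennreal (c k * indicator (ball (0::'a) (\<rho> / 2^k)) x)"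
      using True k by (auto simp: indicator_def intro!: ennreal_leI)
    also have "\<dots> \<le> (\<Sum>k. ennreal (c k * indicator (ball (0::'a) (\<rho> / 2^k)) x))"
      by (rule ennreal_le_suminf)
    finally show ?thesis .
  qed
  have "(\<integral>\<^sup>+x. ennreal (indicator (ball (0::'a) \<rho>) x * norm x powr a) \<partial>lborel)
     \<le> (\<integral>\<^sup>+x. (\<Sum>k. ennreal (c k * indicator (ball (0::'a) (\<rho> / 2^k)) x)) \<partial>lborel)"
    by (intro nn_integral_mono pt)
  also have "\<dots> = (\<Sum>k. \<integral>\<^sup>+x. ennreal (c k * indicator (ball (0::'a) (\<rho> / 2^k)) x) \<partial>lborel)"
    by (rule nn_integral_suminf) (intro measurable_compose[OF _ measurable_ennreal] borel_measurable_times borel_measurable_const borel_measurable_indicator, simp)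
  also have "\<dots> = (\<Sum>k. ennreal (c k * (V * (\<rho> / 2^k) ^ n)))"
  proof (intro suminf_cong)
    fix k
    have ck: "0 \<le> c k" unfolding c_def by simp
    have "(\<integral>\<^sup>+x. ennreal (c k * indicator (ball (0::'a) (\<rho> / 2^k)) x) \<partial>lborel)
        = ennreal (c k) * emeasure lborel (ball (0::'a) (\<rho> / 2^k))"
    proof -
      have "(\<lambda>x. ennreal (c k * indicator (ball (0::'a) (\<rho> / 2^k)) x)) = (\<lambda>x. ennreal (c k) * indicator (ball (0::'a) (\<rho> / 2^k)) x)"
        by (auto simp: indicator_def)
      thus ?thesis by (simp add: nn_integral_cmult_indicator)
    qed
    also have "\<dots> = ennreal (c k * (V * (\<rho> / 2^k) ^ n))"
      using r ck by (simp add: emeasure_ball V_def n_def ennreal_mult)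
    finally show "(\<integral>\<^sup>+x. ennreal (c k * indicator (ball (0::'a) (\<rho> / 2^k)) x) \<partial>lborel) = ennreal (c k * (V * (\<rho> / 2^k) ^ n))" .
  qed
  also have "(\<lambda>k. c k * (V * (\<rho> / 2^k) ^ n)) = (\<lambda>k. (V * 2 powr (-a) * \<rho> powr (n + a)) * q ^ k)"
    unfolding c_def q_def using dyadic_alg[OF r] by blast
  also have "(\<Sum>k. ennreal ((V * 2 powr (-a) * \<rho> powr (n + a)) * q ^ k))
      = ennreal ((V * 2 powr (-a) * \<rho> powr (n + a)) * (1 / (1 - q)))"
    using q V by (intro suminf_ennreal_eq sums_mult geometric_sums) auto
  finally show ?thesis unfolding q_def n_def V_def by (simp add: field_simps)
qed

definition Iz :: "real \<Rightarrow> 'a::euclidean_space \<Rightarrow> real \<Rightarrow> real" where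
  "Iz a z R = integral\<^sup>L lborel (\<lambda>x. indicator (ball z R) x * norm x powr a)"

lemma Iz_meas: "(\<lambda>x::'a::euclidean_space. indicator (ball z R) x * norm x powr a) \<in> borel_measurable lborel"
proof -
  have "(\<lambda>x::'a::euclidean_space. indicator (ball z R) x * norm x powr a) \<in> borel_measurable borel"
    by (intro borel_measurable_times borel_measurable_indicator) (simp, measurable)
  thus ?thesis by simp
qed

lemma Iz_nn_fin:
  assumes a: "- real DIM('a::euclidean_space) < a"
  shows "(\<integral>\<^sup>+x. ennreal (indicator (ball (z::'a) R) x * norm x powr a) \<partial>lborel) < \<infinity>"
proof -
  define \<rho> where "\<rho> = norm z + \<bar>R\<bar> + 1"
  have r: "0 < \<rho>" unfolding \<rho>_def by (simp add: add_nonneg_pos)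
  have sub: "ball z R \<subseteq> ball 0 \<rho>"
  proof
    fix x assume "x \<in> ball z R"
    hence "norm (z - x) < R" by (simp add: dist_norm)
    thus "x \<in> ball 0 \<rho>" unfolding \<rho>_def
      using norm_triangle_sub[of x z] norm_minus_commute[of x z] by (simp add: dist_norm)
  qed
  have le: "(\<integral>\<^sup>+x. ennreal (indicator (ball (z::'a) R) x * norm x powr a) \<partial>lborel)
      \<le> (\<integral>\<^sup>+x. ennreal (indicator (ball (0::'a) \<rho>) x * norm x powr a) \<partial>lborel)"
    using sub by (intro nn_integral_mono ennreal_leI) (auto simp: indicator_def)
  show ?thesis
  proof (cases "a < 0")
    case True
    show ?thesis using order.trans[OF le nn_upper0[OF True a r]]
      by (simp add: order_le_less_trans)
  next
    case False
    have "(\<integral>\<^sup>+x. ennreal (indicator (ball (0::'a) \<rho>) x * norm x powr a) \<partial>lborel)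
       \<le> (\<integral>\<^sup>+x. ennreal (\<rho> powr a) * indicator (ball (0::'a) \<rho>) x \<partial>lborel)"
    proof (intro nn_integral_mono)
      fix x
      show "ennreal (indicator (ball (0::'a) \<rho>) x * norm x powr a) \<le> ennreal (\<rho> powr a) * indicator (ball (0::'a) \<rho>) x"
        using False by (cases "x \<in> ball 0 \<rho>") (auto simp: indicator_def intro!: ennreal_leI powr_mono2)
    qed
    also have "\<dots> = ennreal (\<rho> powr a) * emeasure lborel (ball (0::'a) \<rho>)"
      by (simp add: nn_integral_cmult_indicator)
    also have "\<dots> < \<infinity>" using emeasure_lborel_ball_finite[of "0::'a" \<rho>]
      by (simp add: ennreal_mult_less_top)
    finally show ?thesis using le by (simp add: order_le_less_trans)
  qed
qed

lemma Iz_integrable: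
  assumes a: "- real DIM('a::euclidean_space) < a"
  shows "integrable lborel (\<lambda>x. indicator (ball (z::'a) R) x * norm x powr a)"
  by (rule integrableI_nonneg[OF Iz_meas _ Iz_nn_fin[OF a]]) auto

lemma Iz_nonneg: "0 \<le> Iz a z R"
  unfolding Iz_def by (intro integral_nonneg_AE) auto

lemma Iz_upper0:
  fixes a \<rho> :: real
  assumes a: "a < 0" "- real DIM('a::euclidean_space) < a" and r: "0 < \<rho>"
  shows "Iz a (0::'a) \<rho> \<le> unit_ball_vol DIM('a) * 2 powr (-a) / (1 - 2 powr (-(DIM('a) + a))) * \<rho> powr (DIM('a) + a)"
proof -
  have q: "2 powr (-(DIM('a) + a)) < (1::real)"
    using a powr_less_mono[of "-(DIM('a) + a)" 0 "2::real"] by auto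
  have "Iz a (0::'a) \<rho> = enn2real (\<integral>\<^sup>+x. ennreal (indicator (ball (0::'a) \<rho>) x * norm x powr a) \<partial>lborel)"
    unfolding Iz_def by (rule integral_eq_nn_integral[OF Iz_meas]) auto
  also have "\<dots> \<le> unit_ball_vol DIM('a) * 2 powr (-a) / (1 - 2 powr (-(DIM('a) + a))) * \<rho> powr (DIM('a) + a)"
    using nn_upper0[OF a r] q by (intro enn2real_leI) auto
  finally show ?thesis .
qed

lemma unit_dir: "\<exists>u::'a::euclidean_space. norm u = 1 \<and> z = norm z *\<^sub>R u"
proof (cases "z = 0")
  case True
  obtain b :: 'a where "b \<in> Basis" using nonempty_Basis by blast
  thus ?thesis using True by (intro exI[of _ b]) auto
next
  case False
  thus ?thesis by (intro exI[of _ "sgn z"]) (simp add: norm_sgn sgn_div_norm)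
qed

lemma integrable_ind_const: "integrable lborel (\<lambda>x::'a::euclidean_space. (C::real) * indicator (ball y r) x)"
  using emeasure_lborel_ball_finite[of y r]
  by (intro integrable_mult_right integrable_real_indicator) auto

lemma integral_ind_const: "0 \<le> r \<Longrightarrow> integral\<^sup>L lborel (\<lambda>x::'a::euclidean_space. (C::real) * indicator (ball y r) x) = C * (unit_ball_vol DIM('a) * r ^ DIM('a))"
  by (simp add: content_ball)

lemma Iz_lower:
  assumes a: "- real DIM('a::euclidean_space) < a"
  shows "\<exists>c>0. \<forall>(z::'a) R. 0 < R \<longrightarrow> c * (R ^ DIM('a) * max R (norm z) powr a) \<le> Iz a z R"
proof -
  define n where "n = DIM('a)"
  define V where "V = unit_ball_vol n"
  define m where "m = min (4 powr (-a)) (2 powr a :: real)"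
  have V: "0 < V" unfolding V_def by simp
  have m: "0 < m" unfolding m_def by simp
  show ?thesis
  proof (intro exI[of _ "V * (1/4)^n * m"] conjI allI impI)
    show "0 < V * (1/4)^n * m" using V m by simp
    fix z :: 'a and R :: real assume R: "0 < R"
    define r where "r = norm z"
    define d where "d = max R r"
    have d: "0 < d" "R \<le> d" "r \<le> d" "0 \<le> r" unfolding d_def r_def using R by auto
    obtain u :: 'a where u: "norm u = 1" "z = r *\<^sub>R u" using unit_dir[of z] unfolding r_def by blast
    define y where "y = (r + R/2) *\<^sub>R u"
    have ny: "norm y = r + R/2" unfolding y_def using u d R by simp
    have dzy: "norm (z - y) = R/2" unfolding y_def using u R by (simp add: algebra_simps)
    have pt: "m * d powr a * indicator (ball y (R/4)) x \<le> indicator (ball z R) x * norm x powr a" for x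
    proof (cases "x \<in> ball y (R/4)")
      case False thus ?thesis by (simp add: indicator_def)
    next
      case True
      hence yx: "norm (y - x) < R/4" by (simp add: dist_norm)
      have "norm (z - x) \<le> norm (z - y) + norm (y - x)" using norm_triangle_ineq[of "z - y" "y - x"] by simp
      hence "norm (z - x) < R" using yx dzy R by linarith
      hence inz: "x \<in> ball z R" by (simp add: dist_norm)
      have lo: "d/4 \<le> norm x"
      proof -
        have "norm y \<le> norm x + norm (y - x)" using norm_triangle_sub[of y x] by simp
        hence "r + R/4 \<le> norm x" using ny yx by linarith
        moreover have "d/4 \<le> r + R/4" unfolding d_def using d R by (auto simp: max_def)
        ultimately show ?thesis by linarith
      qed
      have hi: "norm x \<le> 2 * d"
      proof -
        have "norm x \<le> norm y + norm (x - y)" using norm_triangle_sub[of x y] by simp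
        thus ?thesis using ny yx d norm_minus_commute[of x y] by linarith
      qed
      have xpos: "0 < norm x" using lo d by linarith
      have "m * d powr a \<le> norm x powr a"
      proof (cases "0 \<le> a")
        case True
        have "m * d powr a \<le> 4 powr (-a) * d powr a" unfolding m_def by (intro mult_right_mono) auto
        also have "\<dots> = (d/4) powr a" using d by (simp add: powr_divide powr_minus_divide)
        also have "\<dots> \<le> norm x powr a" using True lo d by (intro powr_mono2) auto
        finally show ?thesis .
      next
        case False
        have "m * d powr a \<le> 2 powr a * d powr a" unfolding m_def by (intro mult_right_mono) auto
        also have "\<dots> = (2 * d) powr a" using d by (simp add: powr_mult)
        also have "\<dots> \<le> norm x powr a" using False hi xpos by (intro powr_mono2') auto
        finally show ?thesis .
      qed
      thus ?thesis using True inz by simp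
    qed
    have "integral\<^sup>L lborel (\<lambda>x. m * d powr a * indicator (ball y (R/4)) x) = m * d powr a * (V * (R/4) ^ n)"
      unfolding V_def n_def by (rule integral_ind_const) (use R in simp)
    hence "m * d powr a * (V * (R/4) ^ n) = integral\<^sup>L lborel (\<lambda>x. m * d powr a * indicator (ball y (R/4)) x)"
      by (rule sym)
    also have "\<dots> \<le> Iz a z R" unfolding Iz_def
      by (intro integral_mono integrable_ind_const Iz_integrable a pt)
    finally show "V * (1/4)^n * m * (R ^ DIM('a) * max R (norm z) powr a) \<le> Iz a z R"
      unfolding d_def r_def n_def by (simp add: power_divide algebra_simps)
  qed
qed

lemma Iz_upper:
  assumes a: "- real DIM('a::euclidean_space) < a"
  shows "\<exists>c>0. \<forall>(z::'a) R. 0 < R \<longrightarrow> Iz a z R \<le> c * (R ^ DIM('a) * max R (norm z) powr a)"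
proof -
  define n where "n = DIM('a)"
  define V where "V = unit_ball_vol n"
  define C0 where "C0 = V * 2 powr (-a) / (1 - 2 powr (-(n + a)))"
  have V: "0 < V" unfolding V_def by simp
  have q: "2 powr (-(n + a)) < (1::real)"
    using a powr_less_mono[of "-(n + a)" 0 "2::real"] unfolding n_def by auto
  have C0: "0 < C0" unfolding C0_def using V q by simp
  define c where "c = 2 powr a * V + 2 powr (-a) * V + C0 * 4 powr (n + a) * 2 powr (-a)"
  have c1: "2 powr a * V \<le> c" and c2: "2 powr (-a) * V \<le> c" and c3: "C0 * 4 powr (n + a) * 2 powr (-a) \<le> c"
    unfolding c_def using V C0 by (auto intro!: add_nonneg_nonneg)
  show ?thesis
  proof (intro exI[of _ c] conjI allI impI)
    show "0 < c" using c1 V by (smt (verit) powr_gt_zero mult_pos_pos)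
    fix z :: 'a and R :: real assume R: "0 < R"
    define r where "r = norm z"
    define d where "d = max R r"
    have d: "0 < d" "R \<le> d" "r \<le> d" "0 \<le> r" unfolding d_def r_def using R by auto
    have K: "0 \<le> R ^ n * d powr a" using R by simp
    have nx: "norm x \<le> r + R" "r - R \<le> norm x" if "x \<in> ball z R" for x
    proof -
      have "norm (z - x) < R" using that by (simp add: dist_norm)
      thus "norm x \<le> r + R" "r - R \<le> norm x" unfolding r_def
        using norm_triangle_sub[of x z] norm_minus_commute[of x z] norm_triangle_sub[of z x] by linarith+
    qed
    have bound_const: "Iz a z R \<le> C * (V * R ^ n)"
      if C: "\<And>x. x \<in> ball z R \<Longrightarrow> norm x powr a \<le> C" for C
    proof -
      have "Iz a z R \<le> integral\<^sup>L lborel (\<lambda>x. C * indicator (ball z R) x)" unfolding Iz_def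
        by (intro integral_mono integrable_ind_const Iz_integrable a) (auto simp: indicator_def C)
      also have "\<dots> = C * (V * R ^ n)"
        unfolding V_def n_def by (rule integral_ind_const) (use R in simp)
      finally show ?thesis .
    qed
    show "Iz a z R \<le> c * (R ^ DIM('a) * max R (norm z) powr a)"
    proof (cases "0 \<le> a")
      case True
      have "Iz a z R \<le> (2 * d) powr a * (V * R ^ n)"
      proof (rule bound_const)
        fix x assume "x \<in> ball z R"
        hence "norm x \<le> 2 * d" using nx d by fastforce
        thus "norm x powr a \<le> (2 * d) powr a" using True by (intro powr_mono2) auto
      qed
      also have "\<dots> = (2 powr a * V) * (R ^ n * d powr a)" using d by (simp add: powr_mult)
      also have "\<dots> \<le> c * (R ^ n * d powr a)" by (intro mult_right_mono c1 K)
      finally show ?thesis unfolding d_def r_def n_def .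
    next
      case False
      show ?thesis
      proof (cases "2 * R < r")
        case True
        hence dr: "d = r" unfolding d_def using R by simp
        have "Iz a z R \<le> (d / 2) powr a * (V * R ^ n)"
        proof (rule bound_const)
          fix x assume "x \<in> ball z R"
          hence "d / 2 \<le> norm x" using nx dr True by fastforce
          thus "norm x powr a \<le> (d / 2) powr a" using False d by (intro powr_mono2') auto
        qed
        also have "\<dots> = (2 powr (-a) * V) * (R ^ n * d powr a)" using d
          by (simp add: powr_divide powr_minus_divide)
        also have "\<dots> \<le> c * (R ^ n * d powr a)" by (intro mult_right_mono c2 K)
        finally show ?thesis unfolding d_def r_def n_def .
      next
        case rR: False
        have ptw: "indicator (ball z R) x * norm x powr a \<le> indicator (ball 0 (4 * R)) x * norm x powr a" for x
        proof (cases "x \<in> ball z R")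
          case True
          hence "norm x < 4 * R" using nx rR R by fastforce
          thus ?thesis using True by (simp add: indicator_def)
        qed (simp add: indicator_def)
        have "Iz a z R \<le> Iz a (0::'a) (4 * R)" unfolding Iz_def
          apply (rule integral_mono) using Iz_integrable[OF a] apply blast using Iz_integrable[OF a] apply blast using ptw apply blast done
        also have "\<dots> \<le> C0 * (4 * R) powr (n + a)"
          using Iz_upper0[of a "4 * R"] False a R unfolding C0_def V_def n_def by simp
        also have "\<dots> = C0 * 4 powr (n + a) * (R ^ n * R powr a)"
          using R by (simp add: powr_mult powr_add powr_realpow)
        also have "R powr a \<le> (d / 2) powr a" using False d rR unfolding d_def
          by (intro powr_mono2') (auto simp: max_def)
        hence "C0 * 4 powr (n + a) * (R ^ n * R powr a) \<le> C0 * 4 powr (n + a) * (R ^ n * (d / 2) powr a)"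
          using C0 R by (intro mult_left_mono) auto
        also have "\<dots> = (C0 * 4 powr (n + a) * 2 powr (-a)) * (R ^ n * d powr a)"
          using d by (simp add: powr_divide powr_minus_divide)
        also have "\<dots> \<le> c * (R ^ n * d powr a)" by (intro mult_right_mono c3 K)
        finally show ?thesis unfolding d_def r_def n_def .
      qed
    qed
  qed
qed

lemma Iz_strict:
  assumes a: "- real DIM('a::euclidean_space) < a" and R: "0 < R" "R < R'"
  shows "Iz a (z::'a) R < Iz a z R'"
proof -
  obtain c where c: "0 < c" "\<And>(z::'a) R. 0 < R \<Longrightarrow> c * (R ^ DIM('a) * max R (norm z) powr a) \<le> Iz a z R"
    using Iz_lower[OF a] by blast
  obtain u :: 'a where u: "norm u = 1" using unit_dir[of "0::'a"] by blast
  define w where "w = z + ((R + R') / 2) *\<^sub>R u"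
  define \<delta> where "\<delta> = (R' - R) / 2"
  have \<delta>: "0 < \<delta>" unfolding \<delta>_def using R by simp
  have zw: "norm (z - w) = (R + R') / 2" unfolding w_def using u R by simp
  have ptw: "indicator (ball z R) x * norm x powr a + indicator (ball w \<delta>) x * norm x powr a
      \<le> indicator (ball z R') x * norm x powr a" for x
  proof (cases "x \<in> ball w \<delta>")
    case True
    hence wx: "norm (w - x) < \<delta>" by (simp add: dist_norm)
    have "norm (z - x) \<le> norm (z - w) + norm (w - x)" using norm_triangle_ineq[of "z - w" "w - x"] by simp
    moreover have "norm (z - w) \<le> norm (z - x) + norm (w - x)"
      using norm_triangle_ineq[of "z - x" "x - w"] norm_minus_commute[of x w] by simp
    moreover have "\<delta> = (R' - R) / 2" by (rule \<delta>_def)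
    ultimately have "R < norm (z - x) \<and> norm (z - x) < R'" using wx zw by argo
    thus ?thesis using True by (simp add: indicator_def dist_norm)
  next
    case False
    have "ball z R \<subseteq> ball z R'" using R by auto
    thus ?thesis using False by (auto simp: indicator_def)
  qed
  have "Iz a z R + Iz a w \<delta> = integral\<^sup>L lborel (\<lambda>x. indicator (ball z R) x * norm x powr a + indicator (ball w \<delta>) x * norm x powr a)"
    unfolding Iz_def by (subst Bochner_Integration.integral_add) (auto intro: Iz_integrable[OF a])
  also have "\<dots> \<le> Iz a z R'" unfolding Iz_def
    by (intro integral_mono Bochner_Integration.integrable_add Iz_integrable a ptw)
  finally have le: "Iz a z R + Iz a w \<delta> \<le> Iz a z R'" .
  have "0 < c * (\<delta> ^ DIM('a) * max \<delta> (norm w) powr a)" using c \<delta> by simp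
  also have "\<dots> \<le> Iz a w \<delta>" by (rule c(2)[OF \<delta>])
  finally show ?thesis using le by linarith
qed

lemma Iz_mono:
  assumes a: "- real DIM('a::euclidean_space) < a" and R: "R \<le> R'"
  shows "Iz a (z::'a) R \<le> Iz a z R'"
  unfolding Iz_def
  using R by (intro integral_mono Iz_integrable a) (auto simp: indicator_def)

lemma Iz_cont:
  assumes a: "- real DIM('a::euclidean_space) < a"
  shows "isCont (Iz a (z::'a)) R"
  unfolding continuous_at_sequentially comp_def
proof (intro allI impI)
  fix X :: "nat \<Rightarrow> real" assume X: "X \<longlonglongrightarrow> R"
  obtain K where K: "0 < K" "\<And>i. norm (X i) \<le> K" using convergent_imp_Bseq[OF convergentI[OF X]] BseqE by metis
  have null: "sphere z R \<in> null_sets lborel"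
    using negligible_sphere[of z R]
    by (auto simp: null_sets_completion_iff negligible_iff_null_sets negligible_convex_frontier)
  show "(\<lambda>i. Iz a z (X i)) \<longlonglongrightarrow> Iz a z R"
    unfolding Iz_def
  proof (rule integral_dominated_convergence[where w="\<lambda>x. indicator (ball z (K + 1)) x * norm x powr a"])
    show "(\<lambda>x. indicator (ball z R) x * norm x powr a) \<in> borel_measurable lborel" by (rule Iz_meas)
    show "(\<lambda>x. indicator (ball z (X i)) x * norm x powr a) \<in> borel_measurable lborel" for i by (rule Iz_meas)
    show "integrable lborel (\<lambda>x. indicator (ball z (K + 1)) x * norm x powr a)" by (rule Iz_integrable[OF a])
    show "AE x in lborel. norm (indicator (ball z (X i)) x * norm x powr a) \<le> indicator (ball z (K + 1)) x * norm x powr a" for i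
    proof (intro AE_I2)
      fix x
      have "X i \<le> K" using K(2)[of i] by simp
      thus "norm (indicator (ball z (X i)) x * norm x powr a) \<le> indicator (ball z (K + 1)) x * norm x powr a"
        by (auto simp: indicator_def)
    qed
    show "AE x in lborel. (\<lambda>i. indicator (ball z (X i)) x * norm x powr a) \<longlonglongrightarrow> indicator (ball z R) x * norm x powr a"
      using AE_not_in[OF null]
    proof eventually_elim
      fix x assume "x \<notin> sphere z R"
      hence "dist z x < R \<or> R < dist z x" by auto
      thus "(\<lambda>i. indicator (ball z (X i)) x * norm x powr a) \<longlonglongrightarrow> indicator (ball z R) x * norm x powr a"
      proof
        assume lt: "dist z x < R"
        have "eventually (\<lambda>i. dist z x < X i) sequentially" using order_tendstoD(1)[OF X lt] .
        hence "eventually (\<lambda>i. indicator (ball z (X i)) x * norm x powr a = indicator (ball z R) x * norm x powr a) sequentially"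
          by eventually_elim (use lt in \<open>simp add: indicator_def\<close>)
        thus ?thesis by (rule tendsto_eventually)
      next
        assume gt: "R < dist z x"
        have "eventually (\<lambda>i. X i < dist z x) sequentially" using order_tendstoD(2)[OF X gt] .
        hence "eventually (\<lambda>i. indicator (ball z (X i)) x * norm x powr a = indicator (ball z R) x * norm x powr a) sequentially"
          by eventually_elim (use gt in \<open>simp add: indicator_def\<close>)
        thus ?thesis by (rule tendsto_eventually)
      qed
    qed
  qed
qed

definition phi :: "real \<Rightarrow> real \<Rightarrow> real \<Rightarrow> real" where
  "phi b r R = R powr 2 * max R r powr (-b)"

definition psi :: "real \<Rightarrow> real \<Rightarrow> real \<Rightarrow> real" where
  "psi b r s = s powr (1/2) * max (s powr (1/(2-b))) r powr (b/2)"

lemma psi_pos: assumes s: "0 < s" shows "0 < psi b r s"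
proof -
  have "0 < max (s powr (1/(2-b))) r" using s by (simp add: less_max_iff_disj)
  thus ?thesis unfolding psi_def using s by simp
qed

lemma phi_psi:
  assumes b: "b < 2" and r: "0 \<le> r" and s: "0 < s"
  shows "phi b r (psi b r s) = s"
proof (cases "r \<le> s powr (1/(2-b))")
  case True
  have sp: "0 < s powr (1/(2-b))" using s by simp
  have p1: "psi b r s = s powr (1/2) * (s powr (1/(2-b))) powr (b/2)"
    unfolding psi_def using True s by simp
  have p2: "(s powr (1/(2-b))) powr (b/2) = s powr (1/(2-b) * (b/2))" by (rule powr_powr)
  have ex: "1/2 + 1/(2-b) * (b/2) = 1/(2-b)" using b by (simp add: field_simps)
  have "psi b r s = s powr (1/2 + 1/(2-b) * (b/2))" unfolding p1 p2 by (rule powr_add[symmetric])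
  hence ps: "psi b r s = s powr (1/(2-b))" unfolding ex .
  have mx: "max (s powr (1/(2-b))) r = s powr (1/(2-b))" using True by simp
  have "phi b r (psi b r s) = (s powr (1/(2-b))) powr 2 * (s powr (1/(2-b))) powr (-b)"
    unfolding phi_def ps mx ..
  also have "\<dots> = (s powr (1/(2-b))) powr (2 - b)" by (subst powr_add[symmetric]) simp
  also have "\<dots> = s powr (1/(2-b) * (2-b))" by (rule powr_powr)
  also have "1/(2-b) * (2-b) = 1" using b by simp
  finally show ?thesis using s by simp
next
  case False
  hence rp: "0 < r" using s by (smt (verit) powr_ge_zero)
  have ps: "psi b r s = s powr (1/2) * r powr (b/2)"
    unfolding psi_def using False by simp
  have "s < r powr (2 - b)"
  proof -
    have "s = (s powr (1/(2-b))) powr (2-b)" using b s by (simp add: powr_powr)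
    also have "\<dots> < r powr (2-b)" using False b s by (intro powr_less_mono2) auto
    finally show ?thesis .
  qed
  hence "s powr (1/2) < (r powr (2-b)) powr (1/2)" using s by (intro powr_less_mono2) auto
  hence "psi b r s < r powr ((2-b)/2) * r powr (b/2)" unfolding ps using rp
    by (simp add: powr_powr)
  also have "\<dots> = r" using rp by (simp add: powr_add[symmetric] field_simps)
  finally have lt: "psi b r s < r" .
  show ?thesis unfolding phi_def using lt ps s rp
    by (simp add: powr_mult powr_powr powr_add[symmetric])
qed

lemma phi_scale:
  assumes b: "b < 2" and r: "0 \<le> r" and R: "0 < R" and K: "1 \<le> K"
  shows "min (K powr (2-b)) (K powr 2) * phi b r R \<le> phi b r (K * R)"
proof -
  have m1: "max R r \<le> max (K * R) r" using K R by (auto simp: max_def) (smt (verit) mult_le_cancel_right1)+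
  have m2: "max (K * R) r \<le> K * max R r" using K R r by (auto simp: max_def) (smt (verit) mult_le_cancel_right1 mult_left_mono)+
  have mp: "0 < max R r" using R by simp
  have Kp: "0 < K" using K by simp
  have e: "(K * R) powr 2 = K powr 2 * R powr 2" using Kp R by (simp add: powr_mult)
  show ?thesis
  proof (cases "0 \<le> b")
    case True
    have "max (K * R) r powr (-b) \<ge> (K * max R r) powr (-b)"
    proof -
      have KRm: "0 < max (K * R) r" using mult_pos_pos[OF Kp R] by (simp add: less_max_iff_disj)
      show ?thesis using m2 True KRm by (intro powr_mono2') auto
    qed
    hence "phi b r (K * R) \<ge> K powr 2 * R powr 2 * (K powr (-b) * max R r powr (-b))"
      unfolding phi_def e using Kp mp by (simp add: powr_mult mult_left_mono)
    also have "K powr 2 * R powr 2 * (K powr (-b) * max R r powr (-b)) = K powr (2 - b) * phi b r R"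
      unfolding phi_def using Kp by (simp add: powr_diff powr_minus divide_inverse algebra_simps)
    finally show ?thesis by (smt (verit) min.cobounded1 mult_right_mono phi_def powr_ge_zero mult_nonneg_nonneg)
  next
    case False
    have "max (K * R) r powr (-b) \<ge> max R r powr (-b)"
      using m1 mp False by (intro powr_mono2) auto
    hence "phi b r (K * R) \<ge> K powr 2 * phi b r R"
      unfolding phi_def e using Kp mp by (simp add: mult_left_mono)
    thus ?thesis by (smt (verit) min.cobounded2 mult_right_mono phi_def powr_ge_zero mult_nonneg_nonneg)
  qed
qed

lemma phi_mono:
  assumes b: "b < 2" and r: "0 \<le> r" and R: "0 < R" "R \<le> R'"
  shows "phi b r R \<le> phi b r R'"
proof -
  define K where "K = R' / R"
  have K: "1 \<le> K" "K * R = R'" unfolding K_def using R by auto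
  have "1 \<le> min (K powr (2-b)) (K powr 2)" using K b by (simp add: ge_one_powr_ge_zero)
  moreover have "0 \<le> phi b r R" unfolding phi_def by simp
  ultimately have "1 * phi b r R \<le> min (K powr (2-b)) (K powr 2) * phi b r R"
    by (rule mult_right_mono)
  hence "phi b r R \<le> min (K powr (2-b)) (K powr 2) * phi b r R" by simp
  also have "\<dots> \<le> phi b r R'" using phi_scale[OF b r R(1) K(1)] K(2) by simp
  finally show ?thesis .
qed


theorem lemma5p3:
  fixes \<gamma> \<beta> \<sigma> :: real and N :: nat
  assumes hN: "CARD('n::finite) = N" "N \<ge> 3"
    and h\<gamma>: "\<gamma> < real N"
    and h\<beta>: "\<gamma> - 2 < \<beta>" "\<beta> \<le> (real N - 2) / real N * \<gamma>"
    and h\<sigma>: "\<sigma> = 2 + \<beta> - \<gamma>"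
  shows "\<exists>\<kappa>>0.
    (\<forall>(x0 :: real ^ 'n) s. 0 < s \<longrightarrow>
        inverse \<kappa> * s powr (1/2) * (max (s powr (1/\<sigma>)) (norm x0)) powr ((\<gamma> - \<beta>) / 2)
          \<le> rho_gb_inv \<gamma> \<beta> x0 s
      \<and> rho_gb_inv \<gamma> \<beta> x0 s
          \<le> \<kappa> * s powr (1/2) * (max (s powr (1/\<sigma>)) (norm x0)) powr ((\<gamma> - \<beta>) / 2))
  \<and> (\<forall>(\<Omega> :: (real ^ 'n) set) T x0 s. open \<Omega> \<longrightarrow> 0 < T \<longrightarrow> x0 \<in> \<Omega> \<longrightarrow> 0 < s \<longrightarrow> s \<le> T \<longrightarrow>
        (\<sigma> \<ge> 2 \<longrightarrow> rho_gb_inv \<gamma> \<beta> x0 s \<le> \<kappa> * s powr (1/\<sigma>))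
      \<and> (0 < \<sigma> \<and> \<sigma> < 2 \<and> bounded \<Omega> \<longrightarrow>
           rho_gb_inv \<gamma> \<beta> x0 s
             \<le> \<kappa> * s powr (1/2) * (max (T powr (1/\<sigma>)) (SUP z\<in>\<Omega>. norm z)) powr ((\<gamma> - \<beta>) / 2)))"
proof -
  have Npos: "0 < real N" using hN by simp
  have DIM: "DIM(real^'n) = N" using hN(1) by simp
  define a where "a = (\<beta> - \<gamma>) * real CARD('n) / 2"
  define b where "b = \<gamma> - \<beta>"
  have b2: "b < 2" using h\<beta>(1) unfolding b_def by simp
  have sig: "\<sigma> = 2 - b" using h\<sigma> unfolding b_def by simp
  have sigpos: "0 < \<sigma>" using sig b2 by simp
  define p where "p = 2 / real N"
  have p: "0 < p" unfolding p_def using Npos by simp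
  have a_gt: "- real DIM(real^'n) < a"
  proof -
    have "0 < (\<beta> - \<gamma> + 2) * real N" using h\<beta>(1) Npos by simp
    thus ?thesis unfolding a_def DIM hN(1) by (simp add: algebra_simps)
  qed
  have ab: "a * p = - b" unfolding a_def b_def p_def using hN(1) Npos by (simp add: field_simps)
  obtain cL where cL: "0 < cL" "\<And>(z::real^'n) R. 0 < R \<Longrightarrow> cL * (R ^ N * max R (norm z) powr a) \<le> Iz a z R"
    using Iz_lower[OF a_gt] unfolding DIM by blast
  obtain cU where cU: "0 < cU" "\<And>(z::real^'n) R. 0 < R \<Longrightarrow> Iz a z R \<le> cU * (R ^ N * max R (norm z) powr a)"
    using Iz_upper[OF a_gt] unfolding DIM by blast
  have rho_eq: "rho_gb \<gamma> \<beta> x0 R = Iz a x0 R powr p" for x0 :: "real^'n" and R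
    unfolding rho_gb_def Iz_def set_lebesgue_integral_def a_def p_def using hN(1) by simp
  define A where "A = cL powr p"
  define B where "B = cU powr p"
  have A: "0 < A" unfolding A_def using cL by simp
  have B: "0 < B" unfolding B_def using cU by simp
  have conv: "(c * (R ^ N * d powr a)) powr p = c powr p * phi b r R"
    if "0 < c" "0 < R" "0 < d" "d = max R r" for c R d r
  proof -
    have e1: "R ^ N = R powr (real N)" using that by (simp add: powr_realpow)
    have Np: "real N * p = 2" unfolding p_def using Npos by simp
    have e2: "(R ^ N) powr p = R powr 2" unfolding e1 powr_powr Np ..
    have e3: "(d powr a) powr p = d powr (- b)" unfolding powr_powr ab ..
    have "(c * (R ^ N * d powr a)) powr p = c powr p * ((R ^ N) powr p * (d powr a) powr p)"
      using that by (simp add: powr_mult)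
    also have "\<dots> = c powr p * phi b r R" unfolding e2 e3 unfolding phi_def that(4) ..
    finally show ?thesis .
  qed
  have Izpos: "0 < Iz a x0 R" if "0 < R" for x0 :: "real^'n" and R
  proof -
    have "0 < cL * (R ^ N * max R (norm x0) powr a)" using cL(1) that by simp
    thus ?thesis using cL(2)[OF that, of x0] by linarith
  qed
  have bounds: "A * phi b (norm x0) R \<le> rho_gb \<gamma> \<beta> x0 R \<and> rho_gb \<gamma> \<beta> x0 R \<le> B * phi b (norm x0) R"
    if R: "0 < R" for x0 :: "real^'n" and R
  proof -
    have dpos: "0 < max R (norm x0)" using R by simp
    have "(cL * (R ^ N * max R (norm x0) powr a)) powr p \<le> Iz a x0 R powr p"
      using cL R p by (intro powr_mono2) auto
    moreover have "Iz a x0 R powr p \<le> (cU * (R ^ N * max R (norm x0) powr a)) powr p"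
      using cU R p Iz_nonneg[of a x0 R] by (intro powr_mono2) auto
    ultimately show ?thesis unfolding rho_eq A_def B_def
      using conv[OF cL(1) R dpos refl] conv[OF cU(1) R dpos refl] by simp
  qed
  have rstrict: "rho_gb \<gamma> \<beta> x0 R < rho_gb \<gamma> \<beta> x0 R'" if "0 < R" "R < R'" for x0 :: "real^'n" and R R'
    unfolding rho_eq using Iz_strict[OF a_gt that, of x0] Iz_nonneg[of a x0 R] p
    by (intro powr_less_mono2) auto
  have rcont: "continuous_on {R1..R2} (rho_gb \<gamma> \<beta> x0)" if "0 < R1" for x0 :: "real^'n" and R1 R2
  proof -
    have nz: "\<forall>R\<in>{R1..R2}. Iz a x0 R \<noteq> 0"
    proof
      fix R assume "R \<in> {R1..R2}"
      hence "0 < R" using that by simp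
      thus "Iz a x0 R \<noteq> 0" using Izpos[of R x0] by simp
    qed
    have "continuous_on {R1..R2} (\<lambda>R. Iz a x0 R powr p)"
      by (intro continuous_on_powr continuous_on_const continuous_at_imp_continuous_on ballI Iz_cont[OF a_gt] nz)
    thus ?thesis unfolding rho_eq .
  qed
  have ex1: "\<exists>!R. 0 < R \<and> rho_gb \<gamma> \<beta> x0 R = s" if s: "0 < s" for x0 :: "real^'n" and s
  proof -
    define r where "r = norm x0"
    have r: "0 \<le> r" unfolding r_def by simp
    define R1 where "R1 = psi b r (s / (2 * B))"
    define R2 where "R2 = psi b r (2 * s / A)"
    have R1: "0 < R1" unfolding R1_def using s B by (intro psi_pos) simp
    have R2: "0 < R2" unfolding R2_def using s A by (intro psi_pos) simp
    have "rho_gb \<gamma> \<beta> x0 R1 \<le> B * phi b r R1" using bounds[OF R1, of x0] unfolding r_def by simp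
    also have "phi b r R1 = s / (2 * B)" unfolding R1_def using s B b2 r by (intro phi_psi) auto
    finally have lo: "rho_gb \<gamma> \<beta> x0 R1 < s" using B s by (simp add: field_simps)
    have "A * phi b r R2 \<le> rho_gb \<gamma> \<beta> x0 R2" using bounds[OF R2, of x0] unfolding r_def by simp
    moreover have "phi b r R2 = 2 * s / A" unfolding R2_def using s A b2 r by (intro phi_psi) auto
    ultimately have hi: "s < rho_gb \<gamma> \<beta> x0 R2" using A s by (simp add: field_simps)
    have R12: "R1 \<le> R2"
    proof (rule ccontr)
      assume "\<not> R1 \<le> R2"
      hence "rho_gb \<gamma> \<beta> x0 R2 < rho_gb \<gamma> \<beta> x0 R1" using rstrict[OF R2] by simp
      thus False using lo hi by linarith
    qed
    obtain R where R: "R1 \<le> R" "R \<le> R2" "rho_gb \<gamma> \<beta> x0 R = s"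
      using IVT'[of "rho_gb \<gamma> \<beta> x0" R1 s R2] lo hi R12 rcont[OF R1, of R2 x0] by auto
    show ?thesis
    proof (rule ex1I[of _ R])
      show "0 < R \<and> rho_gb \<gamma> \<beta> x0 R = s" using R R1 by simp
      fix R' assume R': "0 < R' \<and> rho_gb \<gamma> \<beta> x0 R' = s"
      show "R' = R"
      proof (rule linorder_cases[of R' R])
        assume "R' < R" thus ?thesis using rstrict[of R' R x0] R' R by simp
      next
        assume "R < R'" thus ?thesis using rstrict[of R R' x0] R' R R1 by simp
      qed
    qed
  qed
  have inv: "0 < rho_gb_inv \<gamma> \<beta> x0 s \<and> rho_gb \<gamma> \<beta> x0 (rho_gb_inv \<gamma> \<beta> x0 s) = s"
    if "0 < s" for x0 :: "real^'n" and s
    unfolding rho_gb_inv_def by (rule theI'[OF ex1[OF that]])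
  define M where "M = 1 / A + B + 1"
  have iA: "0 < 1 / A" using A by simp
  have M1: "1 / A < M" unfolding M_def using iA B by linarith
  have M2: "B < M" unfolding M_def using iA B by linarith
  have M3: "1 \<le> M" unfolding M_def using iA B by linarith
  note M = M1 M2 M3
  define \<kappa> where "\<kappa> = max (M powr (1/\<sigma>)) (M powr (1/2))"
  have k1: "1 \<le> \<kappa>" unfolding \<kappa>_def using M sigpos by (simp add: ge_one_powr_ge_zero le_max_iff_disj)
  have kpos: "0 < \<kappa>" using k1 by simp
  have kM: "M \<le> min (\<kappa> powr (2 - b)) (\<kappa> powr 2)"
  proof -
    have "M = (M powr (1/\<sigma>)) powr \<sigma>" using sigpos M by (simp add: powr_powr)
    also have "\<dots> \<le> \<kappa> powr \<sigma>" unfolding \<kappa>_def using sigpos by (intro powr_mono2) auto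
    finally have 1: "M \<le> \<kappa> powr (2 - b)" using sig by simp
    have "M = (M powr (1/2)) powr 2" using M by (simp add: powr_powr)
    also have "\<dots> \<le> \<kappa> powr 2" unfolding \<kappa>_def by (intro powr_mono2) auto
    finally show ?thesis using 1 by simp
  qed
  have main: "inverse \<kappa> * psi b (norm x0) s \<le> rho_gb_inv \<gamma> \<beta> x0 s \<and> rho_gb_inv \<gamma> \<beta> x0 s \<le> \<kappa> * psi b (norm x0) s"
    if s: "0 < s" for x0 :: "real^'n" and s
  proof -
    define r where "r = norm x0"
    have r: "0 \<le> r" unfolding r_def by simp
    define R0 where "R0 = rho_gb_inv \<gamma> \<beta> x0 s"
    have R0: "0 < R0" "rho_gb \<gamma> \<beta> x0 R0 = s" using inv[OF s, of x0] unfolding R0_def by auto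
    have bR0: "A * phi b r R0 \<le> s" "s \<le> B * phi b r R0" using bounds[OF R0(1), of x0] R0(2) unfolding r_def by auto
    define T where "T = psi b r s"
    have T: "0 < T" unfolding T_def using s by (rule psi_pos)
    have pT: "phi b r T = s" unfolding T_def using b2 r s by (rule phi_psi)
    have up: "R0 \<le> \<kappa> * T"
    proof (rule ccontr)
      assume "\<not> R0 \<le> \<kappa> * T"
      hence lt: "\<kappa> * T \<le> R0" by simp
      have "M * s \<le> min (\<kappa> powr (2 - b)) (\<kappa> powr 2) * phi b r T"
        unfolding pT using kM s by (intro mult_right_mono) auto
      also have "\<dots> \<le> phi b r (\<kappa> * T)" by (rule phi_scale[OF b2 r T k1])
      also have "\<dots> \<le> phi b r R0" using kpos T lt by (intro phi_mono[OF b2 r]) auto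
      finally have "M * s \<le> phi b r R0" .
      hence "A * (M * s) \<le> s" using bR0(1) A by (smt (verit) mult_left_mono)
      moreover have "1 < A * M" using M(1) A by (simp add: field_simps)
      ultimately show False using s by (smt (verit) mult.assoc mult_less_cancel_right1)
    qed
    have lo: "T \<le> \<kappa> * R0"
    proof (rule ccontr)
      assume "\<not> T \<le> \<kappa> * R0"
      hence lt: "\<kappa> * R0 \<le> T" by simp
      have "M * phi b r R0 \<le> min (\<kappa> powr (2 - b)) (\<kappa> powr 2) * phi b r R0"
        using kM by (intro mult_right_mono) (auto simp: phi_def)
      also have "\<dots> \<le> phi b r (\<kappa> * R0)" by (rule phi_scale[OF b2 r R0(1) k1])
      also have "\<dots> \<le> phi b r T" using kpos R0 lt by (intro phi_mono[OF b2 r]) auto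
      finally have "M * phi b r R0 \<le> s" unfolding pT .
      moreover have "s < M * phi b r R0"
      proof -
        have "0 < phi b r R0" using bR0(2) s B by (smt (verit) mult_nonneg_nonpos phi_def powr_ge_zero mult_nonneg_nonneg)
        hence "B * phi b r R0 < M * phi b r R0" using M(2) by simp
        thus ?thesis using bR0(2) by linarith
      qed
      ultimately show False by linarith
    qed
    have "inverse \<kappa> * T \<le> R0" using lo kpos by (simp add: field_simps)
    thus ?thesis using up unfolding R0_def T_def r_def by simp
  qed
  have P1: "\<forall>(x0 :: real ^ 'n) s. 0 < s \<longrightarrow>
        inverse \<kappa> * s powr (1/2) * (max (s powr (1/\<sigma>)) (norm x0)) powr ((\<gamma> - \<beta>) / 2)
          \<le> rho_gb_inv \<gamma> \<beta> x0 s
      \<and> rho_gb_inv \<gamma> \<beta> x0 s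
          \<le> \<kappa> * s powr (1/2) * (max (s powr (1/\<sigma>)) (norm x0)) powr ((\<gamma> - \<beta>) / 2)"
  proof (intro allI impI)
    fix x0 :: "real^'n" and s :: real assume s: "0 < s"
    have ps: "psi b (norm x0) s = s powr (1/2) * (max (s powr (1/\<sigma>)) (norm x0)) powr ((\<gamma> - \<beta>) / 2)"
      unfolding psi_def sig b_def ..
    show "inverse \<kappa> * s powr (1/2) * (max (s powr (1/\<sigma>)) (norm x0)) powr ((\<gamma> - \<beta>) / 2) \<le> rho_gb_inv \<gamma> \<beta> x0 s
      \<and> rho_gb_inv \<gamma> \<beta> x0 s \<le> \<kappa> * s powr (1/2) * (max (s powr (1/\<sigma>)) (norm x0)) powr ((\<gamma> - \<beta>) / 2)"
      using main[OF s, of x0] unfolding ps by (simp add: mult.assoc)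
  qed
  have P2: "\<forall>(\<Omega> :: (real ^ 'n) set) T x0 s. open \<Omega> \<longrightarrow> 0 < T \<longrightarrow> x0 \<in> \<Omega> \<longrightarrow> 0 < s \<longrightarrow> s \<le> T \<longrightarrow>
        (\<sigma> \<ge> 2 \<longrightarrow> rho_gb_inv \<gamma> \<beta> x0 s \<le> \<kappa> * s powr (1/\<sigma>))
      \<and> (0 < \<sigma> \<and> \<sigma> < 2 \<and> bounded \<Omega> \<longrightarrow>
           rho_gb_inv \<gamma> \<beta> x0 s
             \<le> \<kappa> * s powr (1/2) * (max (T powr (1/\<sigma>)) (SUP z\<in>\<Omega>. norm z)) powr ((\<gamma> - \<beta>) / 2))"
  proof (intro allI impI)
    fix \<Omega> :: "(real^'n) set" and T :: real and x0 :: "real^'n" and s :: real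
    assume \<Omega>: "open \<Omega>" and T: "0 < T" and x0: "x0 \<in> \<Omega>" and s: "0 < s" and sT: "s \<le> T"
    have up: "rho_gb_inv \<gamma> \<beta> x0 s \<le> \<kappa> * psi b (norm x0) s" using main[OF s, of x0] by simp
    have sp: "0 < s powr (1/\<sigma>)" using s by simp
    show "(\<sigma> \<ge> 2 \<longrightarrow> rho_gb_inv \<gamma> \<beta> x0 s \<le> \<kappa> * s powr (1/\<sigma>))
      \<and> (0 < \<sigma> \<and> \<sigma> < 2 \<and> bounded \<Omega> \<longrightarrow>
           rho_gb_inv \<gamma> \<beta> x0 s
             \<le> \<kappa> * s powr (1/2) * (max (T powr (1/\<sigma>)) (SUP z\<in>\<Omega>. norm z)) powr ((\<gamma> - \<beta>) / 2))"
    proof (intro conjI impI)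
      assume "\<sigma> \<ge> 2"
      hence bn: "b \<le> 0" using sig by simp
      have "psi b (norm x0) s \<le> s powr (1/2) * (s powr (1/\<sigma>)) powr (b/2)"
        unfolding psi_def sig[symmetric] using bn sp s
        by (intro mult_left_mono powr_mono2') auto
      also have "\<dots> = s powr (1/2 + 1/\<sigma> * (b/2))" by (simp add: powr_powr powr_add)
      also have "1/2 + 1/\<sigma> * (b/2) = 1/\<sigma>" using sig sigpos by (simp add: field_simps)
      finally have "psi b (norm x0) s \<le> s powr (1/\<sigma>)" .
      thus "rho_gb_inv \<gamma> \<beta> x0 s \<le> \<kappa> * s powr (1/\<sigma>)" using up kpos
        by (smt (verit) mult_left_mono)
    next
      assume H: "0 < \<sigma> \<and> \<sigma> < 2 \<and> bounded \<Omega>"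
      hence bp: "0 < b" using sig by simp
      have bdd: "bdd_above (norm ` \<Omega>)" using H by (simp add: bdd_above_norm)
      have x0le: "norm x0 \<le> (SUP z\<in>\<Omega>. norm z)" using bdd x0 by (rule cSUP_upper2) simp
      have "s powr (1/\<sigma>) \<le> T powr (1/\<sigma>)" using s sT sigpos by (intro powr_mono2) auto
      hence mx: "max (s powr (1/\<sigma>)) (norm x0) \<le> max (T powr (1/\<sigma>)) (SUP z\<in>\<Omega>. norm z)"
        using x0le by auto
      have "psi b (norm x0) s \<le> s powr (1/2) * (max (T powr (1/\<sigma>)) (SUP z\<in>\<Omega>. norm z)) powr (b/2)"
        unfolding psi_def sig[symmetric] using bp mx sp
        by (intro mult_left_mono powr_mono2) (auto simp: le_max_iff_disj)
      hence "\<kappa> * psi b (norm x0) s \<le> \<kappa> * (s powr (1/2) * (max (T powr (1/\<sigma>)) (SUP z\<in>\<Omega>. norm z)) powr (b/2))"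
        using kpos by (intro mult_left_mono) auto
      thus "rho_gb_inv \<gamma> \<beta> x0 s
             \<le> \<kappa> * s powr (1/2) * (max (T powr (1/\<sigma>)) (SUP z\<in>\<Omega>. norm z)) powr ((\<gamma> - \<beta>) / 2)"
        using up unfolding b_def by (simp add: mult.assoc)
    qed
  qed
  show ?thesis using kpos P1 P2 by blast
qed

end
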